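(* For every integer $t\ge 3$, the set $[3^t+11]$ admits a $3$-good partition. For $t\ge 4$ one such partition consists of the pairs $\{i,\ 3^t-i\}$ for $1\le i\le (3^t-1)/2$ with $i\notin\{3,9,12,13,14,15\}$, the singletons $\{3\}$ and $\{9\}$, the pairs $\{12,15\}$ and $\{13,14\}$, and the triples $\{3^t-3,3^t,3^t+3\}$, $\{3^t-9,3^t+1,3^t+8\}$, $\{3^t-12,3^t+5,3^t+7\}$, $\{3^t-13,3^t+2,3^t+11\}$, $\{3^t-14,3^t+4,3^t+10\}$, $\{3^t-15,3^t+6,3^t+9\}$.
   Context: A partition of $[n]=\{1,\dots,n\}$ into nonempty parts is called $3$-good if every part has at most $3$ elements and the sum of the elements of every part is a power of $3$, i.e. equals $3^s$ for some integer $s\ge 0$. *)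

theory Defs
  imports Main "HOL-Library.Disjoint_Sets"
begin

definition three_good :: "nat \<Rightarrow> nat set set \<Rightarrow> bool" where
  "three_good n P \<longleftrightarrow> partition_on {1..n} P \<and>
     (\<forall>B\<in>P. card B \<le> 3 \<and> (\<exists>s::nat. \<Sum>B = 3 ^ s))"

definition explicit_partition :: "nat \<Rightarrow> nat set set" where
  "explicit_partition t = (let N = (3::nat) ^ t in
     {{i, N - i} | i. 1 \<le> i \<and> i \<le> (N - 1) div 2 \<and> i \<notin> {3, 9, 12, 13, 14, 15}}
     \<union> {{3}, {9}, {12, 15}, {13, 14},
        {N - 3, N, N + 3}, {N - 9, N + 1, N + 8}, {N - 12, N + 5, N + 7},
        {N - 13, N + 2, N + 11}, {N - 14, N + 4, N + 10}, {N - 15, N + 6, N + 9}})"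

end

theory Submission
  imports Defs
begin

lemma small_case: "three_good 38 {{1, 8}, {2, 25}, {3}, {4, 23}, {5, 22}, {6, 37, 38}, {7, 20}, {9, 18}, {10, 35, 36}, {11, 16}, {12, 15}, {13, 14}, {17, 30, 34}, {19, 29, 33}, {21, 28, 32}, {24, 26, 31}, {27}}"
proof -
  have e: "{1..38::nat} = {1,2,3,4,5,6,7,8,9,10,11,12,13,14,15,16,17,18,19,20,21,22,23,24,25,26,27,28,29,30,31,32,33,34,35,36,37,38}"
    by (rule set_eqI, simp, presburger)
  have q: "\<exists>s. (3::nat)^s = 9" "\<exists>s. (3::nat)^s = 27" "\<exists>s. (3::nat)^s = 3" "\<exists>s. (3::nat)^s = 81"
    by (rule exI[of _ 2], simp, rule exI[of _ 3], simp, rule exI[of _ 1], simp, rule exI[of _ 4], simp)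
  show ?thesis
  unfolding three_good_def partition_on_def disjoint_def e
  apply (intro conjI)
     apply auto[1]
    apply (simp)
   apply (simp)
  apply simp
  using q by simp
qed




definition PpS :: "nat \<Rightarrow> nat set set" where
  "PpS N = {{i, N - i} | i. 1 \<le> i \<and> i \<le> (N - 1) div 2 \<and> i \<notin> {3, 9, 12, 13, 14, 15}}"
definition FS :: "nat \<Rightarrow> nat set set" where
  "FS N = {{3}, {9}, {12, 15}, {13, 14},
        {N - 3, N, N + 3}, {N - 9, N + 1, N + 8}, {N - 12, N + 5, N + 7},
        {N - 13, N + 2, N + 11}, {N - 14, N + 4, N + 10}, {N - 15, N + 6, N + 9}}"

lemma EP: "explicit_partition t = PpS (3^t) \<union> FS (3^t)"
  unfolding explicit_partition_def PpS_def FS_def Let_def by simp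

lemma Pp_mem: assumes "odd N" "B \<in> PpS N"
  shows "\<exists>i. B = {i, N - i} \<and> 1 \<le> i \<and> 2 * i < N \<and> i \<notin> {3, 9, 12, 13, 14, 15}"
proof -
  obtain i where i: "B = {i, N - i}" "1 \<le> i" "i \<le> (N - 1) div 2" "i \<notin> {3, 9, 12, 13, 14, 15}"
    using assms(2) unfolding PpS_def by blast
  have "2 * i < N" using i(3) assms(1) by presburger
  then show ?thesis using i by blast
qed

lemma F_sub: assumes "N \<ge> 81" "C \<in> FS N" shows "C \<subseteq> {1..N+11}"
proof -
  have "\<forall>C\<in>FS N. C \<subseteq> {1..N+11}" unfolding FS_def using assms(1) by (simp; intro conjI; linarith)
  then show ?thesis using assms by blast
qed

lemma distinct_concat_disj: "distinct (concat L) \<Longrightarrow> pairwise disjnt (set (map set L))"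
proof (induction L)
  case Nil then show ?case by simp
next
  case (Cons x L)
  then show ?case by (auto simp: pairwise_insert disjnt_def)
qed

lemma disjFF: assumes N: "N \<ge> 81" shows "pairwise disjnt (FS N)"
proof -
  have "FS N = set (map set [[3], [9], [12, 15], [13, 14],
        [N - 3, N, N + 3], [N - 9, N + 1, N + 8], [N - 12, N + 5, N + 7],
        [N - 13, N + 2, N + 11], [N - 14, N + 4, N + 10], [N - 15, N + 6, N + 9]])"
    unfolding FS_def by simp
  moreover have "distinct (concat [[3], [9], [12, 15], [13, 14],
        [N - 3, N, N + 3], [N - 9, N + 1, N + 8], [N - 12, N + 5, N + 7],
        [N - 13, N + 2, N + 11], [N - 14, N + 4, N + 10], [N - 15, N + 6, N + 9]])"
  proof -
    obtain M where M: "N = M + 15" using N by (intro that[of "N - 15"]) simp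
    have "M \<ge> 66" using N M by simp
    then show ?thesis unfolding M by simp
  qed
  ultimately show ?thesis using distinct_concat_disj by metis
qed

lemma disjPF: assumes "N \<ge> 81" "1 \<le> i" "2 * i < N" "i \<notin> {3, 9, 12, 13, 14, 15}" "C \<in> FS N"
  shows "disjnt {i, N - i} C"
proof -
  have "\<forall>C\<in>FS N. i \<notin> C \<and> N - i \<notin> C" unfolding FS_def using assms(1-4) by (simp; intro conjI; arith)
  then show ?thesis using assms(5) by (simp add: disjnt_def)
qed



lemma F_high: assumes N: "N \<ge> 81" and k: "k \<le> 11" shows "N + k \<in> \<Union>(FS N)"
proof -
  have "k = 0 \<or> k = 1 \<or> k = 2 \<or> k = 3 \<or> k = 4 \<or> k = 5 \<or> k = 6 \<or> k = 7 \<or> k = 8 \<or> k = 9 \<or> k = 10 \<or> k = 11"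
    using k by presburger
  then show ?thesis unfolding FS_def by (elim disjE) simp_all
qed

lemma F_low: assumes N: "N \<ge> 81" and k: "k \<in> {3, 9, 12, 13, 14, 15}" shows "k \<in> \<Union>(FS N)" "N - k \<in> \<Union>(FS N)"
proof -
  have "k = 3 \<or> k = 9 \<or> k = 12 \<or> k = 13 \<or> k = 14 \<or> k = 15" using k by simp
  then show "k \<in> \<Union>(FS N)" "N - k \<in> \<Union>(FS N)" unfolding FS_def by (elim disjE; simp)+
qed

lemma sup_lem: assumes N81: "N \<ge> 81" and oddN: "odd N" and x: "x \<in> {1..N+11}"
  shows "x \<in> \<Union>(PpS N \<union> FS N)"
proof (cases "x \<ge> N")
  case True
  then obtain k where k: "x = N + k" "k \<le> 11" using x by (intro that[of "x - N"]) auto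
  show ?thesis using F_high[OF N81 k(2)] k(1) by blast
next
  case xN: False
  show ?thesis
  proof (cases "x \<in> {3, 9, 12, 13, 14, 15}")
    case True
    then show ?thesis using F_low[OF N81 True] by blast
  next
    case nx: False
    show ?thesis
    proof (cases "N - x \<in> {3, 9, 12, 13, 14, 15}")
      case True
      have "N - (N - x) = x" using xN by simp
      then show ?thesis using F_low(2)[OF N81 True] by simp
    next
      case nnx: False
      show ?thesis
      proof (cases "x \<le> (N - 1) div 2")
        case True
        have "1 \<le> x" using x by simp
        then have "{x, N - x} \<in> PpS N" unfolding PpS_def using True nx by blast
        then show ?thesis by blast
      next
        case c: False
        have "N - x \<le> (N - 1) div 2" using c oddN by presburger
        moreover have "1 \<le> N - x" using xN by simp
        ultimately have "{N - x, N - (N - x)} \<in> PpS N" unfolding PpS_def using nnx by blast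
        moreover have "N - (N - x) = x" using xN by simp
        ultimately have "{N - x, x} \<in> PpS N" by simp
        then show ?thesis by blast
      qed
    qed
  qed
qed

lemma sub_lem: assumes N81: "N \<ge> 81" and oddN: "odd N" shows "\<Union>(PpS N \<union> FS N) \<subseteq> {1..N+11}"
proof
  fix x assume "x \<in> \<Union>(PpS N \<union> FS N)"
  then obtain B where B: "B \<in> PpS N \<union> FS N" "x \<in> B" by blast
  show "x \<in> {1..N+11}"
  proof (cases "B \<in> PpS N")
    case True
    then obtain i where "B = {i, N - i}" "1 \<le> i" "2 * i < N" using Pp_mem[OF oddN] by blast
    then show ?thesis using B by auto
  next
    case False
    then have "B \<in> FS N" using B by blast
    then show ?thesis using F_sub[OF N81] B by blast
  qed
qed

lemma disjPP: assumes oddN: "odd N" and a: "a \<in> PpS N" and b: "b \<in> PpS N" and ab: "a \<noteq> b"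
  shows "disjnt a b"
proof -
  obtain i where i: "a = {i, N - i}" "1 \<le> i" "2 * i < N" using Pp_mem[OF oddN a] by blast
  obtain j where j: "b = {j, N - j}" "1 \<le> j" "2 * j < N" using Pp_mem[OF oddN b] by blast
  have "i \<noteq> j" using ab i j by auto
  then show ?thesis using i j by (auto simp: disjnt_def)
qed

lemma blocksP: assumes oddN: "odd N" and NB: "B \<in> PpS N" shows "card B \<le> 3 \<and> \<Sum>B = N"
proof -
  obtain i where i: "B = {i, N - i}" "1 \<le> i" "2 * i < N" using Pp_mem[OF oddN NB] by blast
  then have "i \<noteq> N - i" by auto
  then have "card B = 2" "\<Sum>B = N" using i by auto
  then show ?thesis by simp
qed

lemma blocksF_aux: fixes N :: nat assumes N81: "N \<ge> 81" and B: "B \<in> {{3}, {9}, {12, 15}, {13, 14},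
        {N - 3, N, N + 3}, {N - 9, N + 1, N + 8}, {N - 12, N + 5, N + 7},
        {N - 13, N + 2, N + 11}, {N - 14, N + 4, N + 10}, {N - 15, N + 6, N + 9::nat}}"
  shows "card B \<le> 3 \<and> (\<Sum>B = 3 \<or> \<Sum>B = 9 \<or> \<Sum>B = 27 \<or> \<Sum>B = 3 * N)"
  proof -
    have tri: "card {N - a, N + b, N + c} \<le> 3 \<and> \<Sum>{N - a, N + b, N + c} = 3 * N"
      if h: "0 < a" "b < c" "a \<le> N" "b + c = a" for a b c
    proof -
      have d: "N - a \<notin> {N + b, N + c}" "N + b \<notin> {N + c}" using h by auto
      have "card {N - a, N + b, N + c} = 3" using d by simp
      moreover have "\<Sum>{N - a, N + b, N + c} = (N - a) + ((N + b) + (N + c))" using d by simp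
      ultimately show ?thesis using h by simp
    qed
    have t0: "card {N - 3, N, N + 3} \<le> 3 \<and> \<Sum>{N - 3, N, N + 3} = 3 * N"
      using tri[of 3 0 3] N81 by simp
    from B have "B = {3} \<or> B = {9} \<or> B = {12, 15} \<or> B = {13, 14} \<or>
        B = {N - 3, N, N + 3} \<or> B = {N - 9, N + 1, N + 8} \<or> B = {N - 12, N + 5, N + 7} \<or>
        B = {N - 13, N + 2, N + 11} \<or> B = {N - 14, N + 4, N + 10} \<or> B = {N - 15, N + 6, N + 9}"
      by (simp only: insert_iff empty_iff simp_thms)
    then show ?thesis
    proof (elim disjE)
    qed (use t0 tri[of 9 1 8] tri[of 12 5 7] tri[of 13 2 11] tri[of 14 4 10] tri[of 15 6 9] N81 in simp_all)
  qed

lemma big_case: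
  fixes t N :: nat
  assumes Nt: "N = 3^t" and t4: "t \<ge> 4"
  shows "three_good (N + 11) (explicit_partition t)"
proof -
  have "(3::nat)^4 \<le> 3^t" using t4 by (rule power_increasing) simp
  then have N81: "N \<ge> 81" using Nt by simp
  have oddN: "odd N" using Nt by simp
  have EP': "explicit_partition t = PpS N \<union> FS N" using EP Nt by simp
  have U: "\<Union>(PpS N \<union> FS N) = {1..N+11}"
    using sub_lem[OF N81 oddN] sup_lem[OF N81 oddN] by blast
  have disj: "disjoint (PpS N \<union> FS N)"
    unfolding pairwise_def
  proof (intro ballI impI)
    fix a b assume a: "a \<in> PpS N \<union> FS N" and b: "b \<in> PpS N \<union> FS N" and ab: "a \<noteq> b"
    show "disjnt a b"
    proof (cases "a \<in> PpS N")
      case aP: True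
      show ?thesis
      proof (cases "b \<in> PpS N")
        case True then show ?thesis using disjPP[OF oddN aP _ ab] by blast
      next
        case False then have "b \<in> FS N" using b by blast
        moreover obtain i where "a = {i, N - i}" "1 \<le> i" "2 * i < N" "i \<notin> {3, 9, 12, 13, 14, 15}"
          using Pp_mem[OF oddN aP] by blast
        ultimately show ?thesis using disjPF[OF N81] by blast
      qed
    next
      case aF: False
      then have aF: "a \<in> FS N" using a by blast
      show ?thesis
      proof (cases "b \<in> PpS N")
        case bP: True
        obtain i where "b = {i, N - i}" "1 \<le> i" "2 * i < N" "i \<notin> {3, 9, 12, 13, 14, 15}"
          using Pp_mem[OF oddN bP] by blast
        then show ?thesis using disjPF[OF N81 _ _ _ aF] disjnt_sym by blast
      next
        case False then have "b \<in> FS N" using b by blast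
        then show ?thesis using disjFF[OF N81] aF ab unfolding pairwise_def by blast
      qed
    qed
  qed
  have ne: "{} \<notin> PpS N \<union> FS N" unfolding PpS_def FS_def by auto
  have blocks: "\<And>B. B \<in> PpS N \<union> FS N \<Longrightarrow> card B \<le> 3 \<and> (\<exists>s::nat. \<Sum>B = 3 ^ s)"
  proof -
    fix B assume B: "B \<in> PpS N \<union> FS N"
    have c: "card B \<le> 3" and sB: "\<Sum>B = 3 \<or> \<Sum>B = 9 \<or> \<Sum>B = 27 \<or> \<Sum>B = 3 * N \<or> \<Sum>B = N"
    proof -
      have "card B \<le> 3 \<and> (\<Sum>B = 3 \<or> \<Sum>B = 9 \<or> \<Sum>B = 27 \<or> \<Sum>B = 3 * N \<or> \<Sum>B = N)"
      proof (cases "B \<in> PpS N")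
        case True then show ?thesis using blocksP[OF oddN] by blast
      next
        case False then have BF: "B \<in> FS N" using B by blast
        have "card B \<le> 3 \<and> (\<Sum>B = 3 \<or> \<Sum>B = 9 \<or> \<Sum>B = 27 \<or> \<Sum>B = 3 * N)"
          by (rule blocksF_aux[OF N81 BF[unfolded FS_def]])
        then show ?thesis by blast
      qed
      then show "card B \<le> 3" "\<Sum>B = 3 \<or> \<Sum>B = 9 \<or> \<Sum>B = 27 \<or> \<Sum>B = 3 * N \<or> \<Sum>B = N" by blast+
    qed
    have "\<exists>s::nat. \<Sum>B = 3 ^ s"
      using sB
    proof (elim disjE)
      assume "\<Sum>B = 3" then show ?thesis by (intro exI[of _ 1]) simp
    next
      assume "\<Sum>B = 9" then show ?thesis by (intro exI[of _ 2]) simp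
    next
      assume "\<Sum>B = 27" then show ?thesis by (intro exI[of _ 3]) simp
    next
      assume "\<Sum>B = 3 * N" then show ?thesis using Nt by (intro exI[of _ "Suc t"]) simp
    next
      assume "\<Sum>B = N" then show ?thesis using Nt by (intro exI[of _ t]) simp
    qed
    then show "card B \<le> 3 \<and> (\<exists>s::nat. \<Sum>B = 3 ^ s)" using c by blast
  qed
  show ?thesis unfolding three_good_def partition_on_def EP'
    using U disj ne blocks by blast
qed

theorem mainTheorem12:
  shows "(\<forall>t::nat. t \<ge> 3 \<longrightarrow> (\<exists>P. three_good (3 ^ t + 11) P)) \<and>
         (\<forall>t::nat. t \<ge> 4 \<longrightarrow> three_good (3 ^ t + 11) (explicit_partition t))"
proof (intro conjI allI impI)
  fix t :: nat assume t: "t \<ge> 4"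
  show "three_good (3 ^ t + 11) (explicit_partition t)" using big_case[OF refl t] .
next
  fix t :: nat assume t: "t \<ge> 3"
  show "\<exists>P. three_good (3 ^ t + 11) P"
  proof (cases "t = 3")
    case True
    then show ?thesis using small_case by auto
  next
    case False
    then show ?thesis using big_case[OF refl, of t] t by auto
  qed
qed

end
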